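(* Let $n>2$ be an even integer, $a,c\in\mathbb{R}$ and $b\in\{1,-1\}$. Let $m_n(a,b,c)$ be the $(n+1)\times(n+1)$ symmetric matrix with rows/columns indexed $0,\dots,n$, $(0,0)$-entry $-nc$, $(0,j)$- and $(j,0)$-entries $b$ for $j=1,\dots,n$, and lower-right block the circulant $\mathrm{circ}(c,a,0,\dots,0,a)$ (diagonal $c$, entries $a$ at positions $(j,j')$ with $j'\equiv j\pm1\pmod n$, zeros elsewhere). Let \[\lambda_\pm(c)=\tfrac12\Bigl(2a-(n-1)c\pm\sqrt{\bigl(2a+(n+1)c\bigr)^2+4n}\Bigr),\qquad \lambda_{n/2}=c-2a,\] and, for $a\ne0$, $c_{\mathrm{trans}}=\dfrac{8a^2-n}{4(n+1)a}$. Let $\lambda_{\min}(c)$ and $\lambda_{\max}(c)$ be the smallest and largest eigenvalues of $m_n(a,b,c)$. Then: if $a<0$: $\lambda_{\min}(c)=\lambda_-(c)$, and $\lambda_{\max}(c)=\lambda_+(c)$ for $c<c_{\mathrm{trans}}$, $\lambda_{\max}(c)=c-2a$ for $c\ge c_{\mathrm{trans}}$; if $a=0$: $\lambda_{\min}(c)=\lambda_-(c)$ and $\lambda_{\max}(c)=\lambda_+(c)$; if $a>0$: $\lambda_{\min}(c)=c-2a$ for $c\le c_{\mathrm{trans}}$, $\lambda_{\min}(c)=\lambda_-(c)$ for $c>c_{\mathrm{trans}}$, and $\lambda_{\max}(c)=\lambda_+(c)$. *)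

theory Defs
  imports "Jordan_Normal_Form.Char_Poly"
begin

definition m_mat :: "nat \<Rightarrow> real \<Rightarrow> real \<Rightarrow> real \<Rightarrow> real mat" where
  "m_mat n a b c = mat (n+1) (n+1) (\<lambda>(i,j).
     if i = 0 \<and> j = 0 then - real n * c
     else if i = 0 \<or> j = 0 then b
     else if i = j then c
     else if (int j - int i) mod int n = 1 \<or> (int j - int i) mod int n = int n - 1 then a
     else 0)"

definition lam_plus :: "nat \<Rightarrow> real \<Rightarrow> real \<Rightarrow> real" where
  "lam_plus n a c = (2*a - (real n - 1)*c + sqrt ((2*a + (real n + 1)*c)^2 + 4*real n)) / 2"

definition lam_minus :: "nat \<Rightarrow> real \<Rightarrow> real \<Rightarrow> real" where
  "lam_minus n a c = (2*a - (real n - 1)*c - sqrt ((2*a + (real n + 1)*c)^2 + 4*real n)) / 2"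

definition c_trans :: "nat \<Rightarrow> real \<Rightarrow> real" where
  "c_trans n a = (8*a^2 - real n) / (4*(real n + 1)*a)"

definition lambda_min :: "real mat \<Rightarrow> real" where
  "lambda_min M = Min {k. eigenvalue M k}"

definition lambda_max :: "real mat \<Rightarrow> real" where
  "lambda_max M = Max {k. eigenvalue M k}"

end

theory Submission
  imports Defs
begin

definition sc :: "nat \<Rightarrow> nat \<Rightarrow> nat" where "sc n i = (if i = n then 1 else i + 1)"
definition pr :: "nat \<Rightarrow> nat \<Rightarrow> nat" where "pr n i = (if i = 1 then n else i - 1)"

lemma nb_iff:
  assumes "n > 2" "1 \<le> i" "i \<le> n" "1 \<le> j" "j \<le> n" "i \<noteq> j"
  shows "((int j - int i) mod int n = 1 \<or> (int j - int i) mod int n = int n - 1) \<longleftrightarrow> (j = sc n i \<or> j = pr n i)"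
proof -
  define d where "d = int j - int i"
  have d1: "- int n < d" "d < int n" using assms unfolding d_def by auto
  have dm: "d mod int n = (if d \<ge> 0 then d else d + int n)"
  proof (cases "d \<ge> 0")
    case True then show ?thesis using d1 by (simp add: mod_pos_pos_trivial)
  next
    case False
    have "d mod int n = (d + int n) mod int n" by simp
    also have "\<dots> = d + int n" using False d1 by (intro mod_pos_pos_trivial) auto
    finally show ?thesis using False by simp
  qed
  show ?thesis unfolding d_def[symmetric] dm using assms d1 unfolding sc_def pr_def d_def by auto
qed

lemma sum_sc: assumes "n > 2" shows "(\<Sum>i\<in>{1..n}. f (sc n i)) = (\<Sum>i\<in>{1..n}. (f i :: real))"
  by (rule sum.reindex_bij_witness[where i="pr n" and j="sc n"]) (use assms in \<open>auto simp: sc_def pr_def\<close>)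

lemma sum_pr: assumes "n > 2" shows "(\<Sum>i\<in>{1..n}. f (pr n i)) = (\<Sum>i\<in>{1..n}. (f i :: real))"
  by (rule sum.reindex_bij_witness[where i="sc n" and j="pr n"]) (use assms in \<open>auto simp: sc_def pr_def\<close>)

lemma sum_alt: "(\<Sum>j\<in>{1..2*m}. (-1::real)^j) = 0"
  by (induction m) (simp_all add: sum.cl_ivl_Suc)

lemma mdim: "m_mat n a b c \<in> carrier_mat (n+1) (n+1)"
  unfolding m_mat_def by auto

lemma row0:
  assumes "v \<in> carrier_vec (n+1)"
  shows "(m_mat n a b c *\<^sub>v v) $ 0 = - real n * c * v$0 + b * (\<Sum>j\<in>{1..n}. v$j)"
proof -
  have "(m_mat n a b c *\<^sub>v v) $ 0 = (\<Sum>j\<in>{0..<n+1}. m_mat n a b c $$ (0,j) * v$j)"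
    using assms by (auto simp: m_mat_def scalar_prod_def)
  also have "{0..<n+1} = insert 0 {1..n}" by auto
  also have "(\<Sum>j\<in>insert 0 {1..n}. m_mat n a b c $$ (0,j) * v$j) = - real n * c * v$0 + (\<Sum>j\<in>{1..n}. b * v$j)"
    by (subst sum.insert) (auto simp: m_mat_def intro!: sum.cong)
  finally show ?thesis by (simp add: sum_distrib_left)
qed

lemma rowi:
  assumes "v \<in> carrier_vec (n+1)" "n > 2" "1 \<le> i" "i \<le> n"
  shows "(m_mat n a b c *\<^sub>v v) $ i = b * v$0 + c * v$i + a * (v$(sc n i) + v$(pr n i))"
proof -
  have "(m_mat n a b c *\<^sub>v v) $ i = (\<Sum>j\<in>{0..<n+1}. m_mat n a b c $$ (i,j) * v$j)"
    using assms by (auto simp: m_mat_def scalar_prod_def)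
  also have "{0..<n+1} = insert 0 {1..n}" by auto
  also have "(\<Sum>j\<in>insert 0 {1..n}. m_mat n a b c $$ (i,j) * v$j) = b * v$0 + (\<Sum>j\<in>{1..n}. (if j = i then c * v$i else if j = sc n i \<or> j = pr n i then a * v$j else 0))"
    apply (subst sum.insert)
      apply simp apply simp
    apply (rule arg_cong2[where f="(+)"])
    using assms apply (simp add: m_mat_def)
    apply (rule sum.cong, simp)
    subgoal for j using assms nb_iff[of n i j] by (auto simp: m_mat_def)
    done
  also have "(\<Sum>j\<in>{1..n}. (if j = i then c * v$i else if j = sc n i \<or> j = pr n i then a * v$j else 0))
     = (\<Sum>j\<in>{i, sc n i, pr n i}. (if j = i then c * v$i else if j = sc n i \<or> j = pr n i then a * v$j else 0))"
    by (rule sum.mono_neutral_right) (use assms in \<open>auto simp: sc_def pr_def\<close>)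
  also have "\<dots> = c * v$i + a * v$(sc n i) + a * v$(pr n i)"
    using assms by (auto simp: sc_def pr_def)
  finally show ?thesis by (simp add: algebra_simps)
qed


lemma root_gen:
  fixes x a c s :: real
  assumes "s^2 = (2*a + (x + 1)*c)^2 + 4*x"
  shows "((2*a - (x - 1)*c + s)/2 + x*c)*((2*a - (x - 1)*c + s)/2 - c - 2*a) = x"
proof -
  define T where "T = 2*a - (x - 1)*c"
  have "((T + s)/2 + x*c)*((T + s)/2 - c - 2*a) = ((T + s + 2*x*c)*(T + s - 2*c - 4*a))/4"
    by (simp add: field_simps)
  also have "(T + s + 2*x*c)*(T + s - 2*c - 4*a) = s^2 + (T + 2*x*c)*(T - 2*c - 4*a) + s*(2*T + 2*x*c - 2*c - 4*a)"
    by (simp add: algebra_simps power2_eq_square)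
  also have "2*T + 2*x*c - 2*c - 4*a = 0" unfolding T_def by (simp add: algebra_simps)
  also have "(T + 2*x*c)*(T - 2*c - 4*a) = - ((2*a + (x + 1)*c)^2)"
    unfolding T_def by (simp add: algebra_simps power2_eq_square)
  finally show ?thesis using assms unfolding T_def by simp
qed

lemma Dnn: "0 \<le> (2*a + (real n + 1)*c)^2 + 4*real n" by simp

lemma root_plus: "(lam_plus n a c + real n*c)*(lam_plus n a c - c - 2*a) = real n"
  unfolding lam_plus_def by (rule root_gen) (simp add: Dnn)

lemma root_minus: "(lam_minus n a c + real n*c)*(lam_minus n a c - c - 2*a) = real n"
proof -
  have "lam_minus n a c = (2*a - (real n - 1)*c + (- sqrt ((2*a + (real n + 1)*c)^2 + 4*real n)))/2"
    unfolding lam_minus_def by simp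
  then show ?thesis by (simp only:) (rule root_gen, simp add: Dnn)
qed

lemma root_cases:
  fixes k :: real
  assumes "(k + real n*c)*(k - c - 2*a) = real n"
  shows "k = lam_plus n a c \<or> k = lam_minus n a c"
proof -
  define T where "T = 2*a - (real n - 1)*c"
  define D where "D = (2*a + (real n + 1)*c)^2 + 4*real n"
  have "(2*k - T)^2 - D = 4*((k + real n*c)*(k - c - 2*a) - real n)"
    unfolding T_def D_def by (simp add: algebra_simps power2_eq_square)
  then have "(2*k - T)^2 = D" using assms by simp
  then have "sqrt D = \<bar>2*k - T\<bar>" by (metis real_sqrt_abs)
  then have "2*k - T = sqrt D \<or> 2*k - T = - sqrt D" by linarith
  then show ?thesis unfolding lam_plus_def lam_minus_def T_def[symmetric] D_def[symmetric] by auto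
qed

lemma ev_lam:
  assumes "b = 1 \<or> b = -1" and r: "(l + real n*c)*(l - c - 2*a) = real n" and n: "n > 2"
  shows "eigenvalue (m_mat n a b c) l"
proof -
  define v where "v = vec (n+1) (\<lambda>j. if j = 0 then b*(l-c-2*a) else (1::real))"
  have bb: "b*b = 1" using assms(1) by auto
  have vc: "v \<in> carrier_vec (n+1)" unfolding v_def by simp
  have "m_mat n a b c *\<^sub>v v = l \<cdot>\<^sub>v v"
  proof (rule eq_vecI)
    fix i assume i: "i < dim_vec (l \<cdot>\<^sub>v v)"
    show "(m_mat n a b c *\<^sub>v v) $ i = (l \<cdot>\<^sub>v v) $ i"
    proof (cases "i = 0")
      case True
      have "(m_mat n a b c *\<^sub>v v) $ i = - real n * c * (b*(l-c-2*a)) + b * real n"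
        using True row0[OF vc, of a b c] by (simp add: v_def)
      also have "\<dots> = b * (real n - (l + real n * c) * (l-c-2*a)) + l * (b*(l-c-2*a))"
        by (simp add: algebra_simps)
      also have "\<dots> = (l \<cdot>\<^sub>v v) $ i" using True r by (simp add: v_def)
      finally show ?thesis .
    next
      case False
      then have i1: "1 \<le> i" "i \<le> n" using i vc by auto
      have sc: "sc n i \<noteq> 0" "sc n i \<le> n" "pr n i \<noteq> 0" "pr n i \<le> n" using i1 n by (auto simp: sc_def pr_def)
      have "(m_mat n a b c *\<^sub>v v) $ i = b * (b*(l-c-2*a)) + c + 2*a"
        using rowi[OF vc n i1, of a b c] sc False i1 by (simp add: v_def)
      also have "\<dots> = (b*b)*(l-c-2*a) + c + 2*a" by (simp add: algebra_simps)
      also have "\<dots> = l" using bb by simp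
      finally show ?thesis using False i1 by (simp add: v_def)
    qed
  qed (simp add: v_def m_mat_def)
  moreover have "v \<noteq> 0\<^sub>v (n+1)"
  proof
    assume "v = 0\<^sub>v (n+1)"
    then have "v $ 1 = 0" using n by simp
    then show False unfolding v_def using n by simp
  qed
  ultimately show ?thesis unfolding eigenvalue_def eigenvector_def using vc mdim[of n a b c] by auto
qed

lemma ev_mid:
  assumes n: "n > 2" "even n"
  shows "eigenvalue (m_mat n a b c) (c - 2*a)"
proof -
  define v where "v = vec (n+1) (\<lambda>j. if j = 0 then 0 else (-1::real)^j)"
  have vc: "v \<in> carrier_vec (n+1)" unfolding v_def by simp
  have "m_mat n a b c *\<^sub>v v = (c - 2*a) \<cdot>\<^sub>v v"
  proof (rule eq_vecI)
    fix i assume i: "i < dim_vec ((c - 2*a) \<cdot>\<^sub>v v)"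
    show "(m_mat n a b c *\<^sub>v v) $ i = ((c - 2*a) \<cdot>\<^sub>v v) $ i"
    proof (cases "i = 0")
      case True
      obtain m where m: "n = 2*m" using n by auto
      have "(\<Sum>j\<in>{1..n}. v$j) = (\<Sum>j\<in>{1..n}. (-1::real)^j)" by (rule sum.cong) (auto simp: v_def)
      also have "\<dots> = 0" unfolding m by (rule sum_alt)
      finally show ?thesis using True row0[OF vc, of a b c] by (simp add: v_def)
    next
      case False
      then have i1: "1 \<le> i" "i \<le> n" using i vc by auto
      have sc: "sc n i \<noteq> 0" "sc n i \<le> n" "pr n i \<noteq> 0" "pr n i \<le> n" using i1 n by (auto simp: sc_def pr_def)
      have e1: "(-1::real)^(sc n i) = - ((-1)^i)" using n i1 by (auto simp: sc_def)
      have e2: "(-1::real)^(pr n i) = - ((-1)^i)"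
      proof (cases "i = 1")
        case True then show ?thesis using n by (simp add: pr_def)
      next
        case False
        then have "i = Suc (i - 1)" using i1 by simp
        then have "(-1::real)^i = - ((-1)^(i-1))" by (metis power_Suc mult_minus1)
        then show ?thesis using False by (simp add: pr_def)
      qed
      have "(m_mat n a b c *\<^sub>v v) $ i = c * (-1)^i + a * ((-1)^(sc n i) + (-1)^(pr n i))"
        using rowi[OF vc n(1) i1, of a b c] sc False i1 by (simp add: v_def)
      also have "\<dots> = (c - 2*a) * (-1)^i" unfolding e1 e2 by (simp add: algebra_simps)
      finally show ?thesis using False i1 by (simp add: v_def)
    qed
  qed (simp add: v_def m_mat_def)
  moreover have "v \<noteq> 0\<^sub>v (n+1)"
  proof
    assume "v = 0\<^sub>v (n+1)"
    then have "v $ 1 = 0" using n by simp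
    then show False unfolding v_def using n by simp
  qed
  ultimately show ?thesis unfolding eigenvalue_def eigenvector_def using vc mdim[of n a b c] by auto
qed


lemma ev_class:
  assumes b: "b = 1 \<or> b = -1" and n: "n > 2" and ev: "eigenvalue (m_mat n a b c) k"
  shows "k = lam_plus n a c \<or> k = lam_minus n a c \<or> \<bar>k - c\<bar> \<le> 2*\<bar>a\<bar>"
proof -
  have bb: "b*b = 1" using b by auto
  have dr: "dim_row (m_mat n a b c) = n+1" by (simp add: m_mat_def)
  obtain v where vc: "v \<in> carrier_vec (n+1)" and nz: "v \<noteq> 0\<^sub>v (n+1)"
    and eq: "m_mat n a b c *\<^sub>v v = k \<cdot>\<^sub>v v"
    using ev unfolding eigenvalue_def eigenvector_def dr by auto
  define S where "S = (\<Sum>j\<in>{1..n}. v$j)"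
  have e0: "k * v$0 = - real n * c * v$0 + b * S"
    using row0[OF vc, of a b c] arg_cong[OF eq, of "\<lambda>w. w $ 0"] vc unfolding S_def by simp
  have ei: "k * v$i = b * v$0 + c * v$i + a * (v$(sc n i) + v$(pr n i))" if "i \<in> {1..n}" for i
    using rowi[OF vc n, of i a b c] arg_cong[OF eq, of "\<lambda>w. w $ i"] vc that by simp
  have "k * S = (\<Sum>i\<in>{1..n}. k * v$i)" unfolding S_def by (simp add: sum_distrib_left)
  also have "\<dots> = (\<Sum>i\<in>{1..n}. b * v$0 + c * v$i + a * v$(sc n i) + a * v$(pr n i))"
    by (rule sum.cong) (auto simp: ei algebra_simps)
  also have "\<dots> = (\<Sum>i\<in>{1..n}. b * v$0) + c * S + a * (\<Sum>i\<in>{1..n}. v$(sc n i)) + a * (\<Sum>i\<in>{1..n}. v$(pr n i))"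
    by (simp add: sum.distrib sum_distrib_left S_def)
  also have "(\<Sum>i\<in>{1..n}. v$(sc n i)) = S" unfolding S_def by (rule sum_sc[OF n])
  also have "(\<Sum>i\<in>{1..n}. v$(pr n i)) = S" unfolding S_def by (rule sum_pr[OF n])
  also have "(\<Sum>i\<in>{1..n}. b * v$0) = real n * b * v$0" by simp
  finally have sumeq: "(k - c - 2*a) * S = real n * b * v$0" by (simp add: algebra_simps)
  show ?thesis
  proof (cases "v$0 = 0")
    case False
    have h: "(k + real n * c) * v$0 = b * S" using e0 by (simp add: algebra_simps)
    have "(k + real n * c) * (k - c - 2*a) * v$0 = (k - c - 2*a) * ((k + real n * c) * v$0)" by (simp add: algebra_simps)
    also have "\<dots> = b * ((k - c - 2*a) * S)" unfolding h by (simp add: algebra_simps)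
    also have "\<dots> = (b*b) * real n * v$0" unfolding sumeq by (simp add: algebra_simps)
    finally have "(k + real n * c) * (k - c - 2*a) * v$0 = real n * v$0" using bb by simp
    then have "(k + real n * c) * (k - c - 2*a) = real n" using False by simp
    then show ?thesis using root_cases by blast
  next
    case True
    obtain j where j: "j < n+1" "v$j \<noteq> 0"
    proof (rule ccontr)
      assume "\<not> thesis"
      then have "\<forall>j<n+1. v$j = 0" using that by blast
      then have "v = 0\<^sub>v (n+1)" using vc by (intro eq_vecI) auto
      then show False using nz by simp
    qed
    then have j1: "j \<in> {1..n}" using True by (cases j) auto
    define M where "M = Max ((\<lambda>i. \<bar>v$i\<bar>) ` {1..n})"
    have Mge: "\<bar>v$i\<bar> \<le> M" if "i \<in> {1..n}" for i unfolding M_def using that by (intro Max_ge) auto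
    have "M \<in> (\<lambda>i. \<bar>v$i\<bar>) ` {1..n}" unfolding M_def using j1 by (intro Max_in) auto
    then obtain i0 where i0: "i0 \<in> {1..n}" "\<bar>v$i0\<bar> = M" by auto
    have Mpos: "M > 0" using Mge[OF j1] j(2) by linarith
    have sp: "sc n i0 \<in> {1..n}" "pr n i0 \<in> {1..n}" using i0 n by (auto simp: sc_def pr_def)
    have "(k - c) * v$i0 = a * (v$(sc n i0) + v$(pr n i0))" using ei[OF i0(1)] True by (simp add: algebra_simps)
    then have "\<bar>k - c\<bar> * M = \<bar>a\<bar> * \<bar>v$(sc n i0) + v$(pr n i0)\<bar>" using i0 by (metis abs_mult)
    also have "\<dots> \<le> \<bar>a\<bar> * (2*M)"
      using Mge[OF sp(1)] Mge[OF sp(2)] by (intro mult_left_mono) auto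
    finally have "\<bar>k - c\<bar> * M \<le> (2*\<bar>a\<bar>) * M" by simp
    then show ?thesis using Mpos by simp
  qed
qed

lemma fin_ev: "finite {k. eigenvalue (m_mat n a b c) k}"
proof -
  have "char_poly (m_mat n a b c) \<noteq> 0" using degree_monic_char_poly[OF mdim[of n a b c]] by auto
  then have "finite {k. poly (char_poly (m_mat n a b c)) k = 0}" by (rule poly_roots_finite)
  then show ?thesis using eigenvalue_root_char_poly[OF mdim[of n a b c]] by simp
qed


lemma sq_ge: "\<bar>x\<bar> \<le> sqrt (x^2 + 4*real n)"
proof -
  have "sqrt (x^2) \<le> sqrt (x^2 + 4*real n)" by (intro real_sqrt_le_mono) simp
  then show ?thesis by simp
qed

lemma keyD: "(2*a + (real n + 1)*c)^2 + 4*real n - ((real n + 1)*c - 6*a)^2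
   = 4*(real n + 4*a*(real n + 1)*c - 8*a^2)"
  by (simp add: algebra_simps power2_eq_square)

theorem theorem6:
  fixes n :: nat and a b c :: real
  assumes "n > 2" and "even n" and "b = 1 \<or> b = -1"
  shows "(a < 0 \<longrightarrow>
            lambda_min (m_mat n a b c) = lam_minus n a c \<and>
            (c < c_trans n a \<longrightarrow> lambda_max (m_mat n a b c) = lam_plus n a c) \<and>
            (c \<ge> c_trans n a \<longrightarrow> lambda_max (m_mat n a b c) = c - 2*a))
       \<and> (a = 0 \<longrightarrow>
            lambda_min (m_mat n a b c) = lam_minus n a c \<and>
            lambda_max (m_mat n a b c) = lam_plus n a c)
       \<and> (a > 0 \<longrightarrow>
            (c \<le> c_trans n a \<longrightarrow> lambda_min (m_mat n a b c) = c - 2*a) \<and>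
            (c > c_trans n a \<longrightarrow> lambda_min (m_mat n a b c) = lam_minus n a c) \<and>
            lambda_max (m_mat n a b c) = lam_plus n a c)"
proof -
  define E where "E = {k. eigenvalue (m_mat n a b c) k}"
  define D where "D = (2*a + (real n + 1)*c)^2 + 4*real n"
  define s where "s = sqrt D"
  define R where "R = (real n + 1)*c - 6*a"
  define P where "P = real n + 4*a*(real n + 1)*c - 8*a^2"
  have lp: "lam_plus n a c = (2*a - (real n - 1)*c + s)/2" unfolding lam_plus_def s_def D_def ..
  have lm: "lam_minus n a c = (2*a - (real n - 1)*c - s)/2" unfolding lam_minus_def s_def D_def ..
  have DR: "D - R^2 = 4*P" unfolding D_def R_def P_def by (rule keyD)
  have s0: "s \<ge> 0" unfolding s_def D_def by simp
  have sA: "\<bar>2*a + (real n + 1)*c\<bar> \<le> s" unfolding s_def D_def by (rule sq_ge)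
  have fin: "finite E" unfolding E_def by (rule fin_ev)
  have inp: "lam_plus n a c \<in> E" unfolding E_def using ev_lam[OF assms(3) root_plus assms(1)] by simp
  have inm: "lam_minus n a c \<in> E" unfolding E_def using ev_lam[OF assms(3) root_minus assms(1)] by simp
  have inc: "c - 2*a \<in> E" unfolding E_def using ev_mid[OF assms(1,2)] by simp
  have cls: "k = lam_plus n a c \<or> k = lam_minus n a c \<or> \<bar>k - c\<bar> \<le> 2*\<bar>a\<bar>" if "k \<in> E" for k
    using ev_class[OF assms(3,1)] that unfolding E_def by simp
  have lmp: "lam_minus n a c \<le> lam_plus n a c" unfolding lp lm using s0 by simp
  have lm1: "lam_minus n a c \<le> c + 2*a" unfolding lm using sA by (simp add: field_simps)
  have lp1: "c + 2*a \<le> lam_plus n a c" unfolding lp using sA by (simp add: field_simps)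
  have q: "4*(real n + 1)*a = 4*a*(real n + 1)" by simp
  have lmin: "lambda_min (m_mat n a b c) = x" if "x \<in> E" "\<And>k. k \<in> E \<Longrightarrow> x \<le> k" for x
    unfolding lambda_min_def E_def[symmetric] using fin that by (intro Min_eqI) auto
  have lmax: "lambda_max (m_mat n a b c) = x" if "x \<in> E" "\<And>k. k \<in> E \<Longrightarrow> k \<le> x" for x
    unfolding lambda_max_def E_def[symmetric] using fin that by (intro Max_eqI) auto
  have ctr: "c_trans n a = (8*a^2 - real n) / (4*a*(real n + 1))" unfolding c_trans_def q ..
  have A: "lambda_min (m_mat n a b c) = lam_minus n a c \<and>
            (c < c_trans n a \<longrightarrow> lambda_max (m_mat n a b c) = lam_plus n a c) \<and>
            (c \<ge> c_trans n a \<longrightarrow> lambda_max (m_mat n a b c) = c - 2*a)" if a: "a < 0"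
  proof -
  have qn: "4*a*(real n + 1) < 0" "\<not> 0 < a*(real n + 1)" "\<not> 0 < 4*a*(real n + 1)" using a
    by (auto simp: mult_neg_pos mult_less_0_iff zero_less_mult_iff)
  show ?thesis
  proof (intro conjI impI)
    show "lambda_min (m_mat n a b c) = lam_minus n a c"
      using inm lmp lm1 a by (intro lmin) (auto dest!: cls simp: abs_if split: if_splits)
  next
    assume "c < c_trans n a"
    then have "8*a^2 - real n < c * (4*a*(real n + 1))"
      unfolding ctr using a by (simp add: less_divide_eq qn)
    then have "P > 0" unfolding P_def by (simp add: algebra_simps)
    then have "R \<le> s"
    proof (cases "R \<le> 0")
      case False
      have "R^2 < D" using DR \<open>P > 0\<close> by simp
      then have "R < s" unfolding s_def by (rule real_less_rsqrt)
      then show ?thesis by simp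
    qed (use s0 in simp)
    then have "c - 2*a \<le> lam_plus n a c" unfolding lp R_def by (simp add: field_simps)
    then show "lambda_max (m_mat n a b c) = lam_plus n a c"
      using inp lmp a by (intro lmax) (auto dest!: cls simp: abs_if split: if_splits)
  next
    assume "c \<ge> c_trans n a"
    then have h: "c * (4*a*(real n + 1)) \<le> 8*a^2 - real n"
      unfolding ctr using a by (simp add: divide_le_eq qn)
    then have "P \<le> 0" unfolding P_def by (simp add: algebra_simps)
    have "4*(a*R) = c*(4*a*(real n+1)) - 24*a^2" unfolding R_def by (simp add: algebra_simps power2_eq_square)
    also have "\<dots> \<le> 8*a^2 - real n - 24*a^2" using h by simp
    also have "\<dots> \<le> 0" using zero_le_power2[of a] by linarith
    finally have "a * R \<le> 0" by (simp add: mult.commute)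
    then have R0: "R \<ge> 0" using a by (simp add: mult_le_0_iff)
    have "D \<le> R^2" using DR \<open>P \<le> 0\<close> by simp
    then have "s \<le> sqrt (R^2)" unfolding s_def by (rule real_sqrt_le_mono)
    then have "s \<le> R" using R0 by simp
    then have "lam_plus n a c \<le> c - 2*a" unfolding lp R_def by (simp add: field_simps)
    then show "lambda_max (m_mat n a b c) = c - 2*a"
      using inc lmp a by (intro lmax) (auto dest!: cls simp: abs_if split: if_splits)
  qed
  qed
  have B: "lambda_min (m_mat n a b c) = lam_minus n a c \<and>
            lambda_max (m_mat n a b c) = lam_plus n a c" if a: "a = 0"
  proof
    show "lambda_min (m_mat n a b c) = lam_minus n a c"
      using inm lmp lm1 a by (intro lmin) (auto dest!: cls)
    show "lambda_max (m_mat n a b c) = lam_plus n a c"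
      using inp lmp lp1 a by (intro lmax) (auto dest!: cls)
  qed
  have C: "(c \<le> c_trans n a \<longrightarrow> lambda_min (m_mat n a b c) = c - 2*a) \<and>
            (c > c_trans n a \<longrightarrow> lambda_min (m_mat n a b c) = lam_minus n a c) \<and>
            lambda_max (m_mat n a b c) = lam_plus n a c" if a: "a > 0"
  proof -
  have qp: "4*a*(real n + 1) > 0" "0 < a*(real n + 1)" using a by auto
  show ?thesis
  proof (intro conjI impI)
    assume "c \<le> c_trans n a"
    then have h: "c * (4*a*(real n + 1)) \<le> 8*a^2 - real n"
      unfolding ctr using a by (simp add: le_divide_eq qp)
    then have "P \<le> 0" unfolding P_def by (simp add: algebra_simps)
    have "4*(a*R) = c*(4*a*(real n+1)) - 24*a^2" unfolding R_def by (simp add: algebra_simps power2_eq_square)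
    also have "\<dots> \<le> 8*a^2 - real n - 24*a^2" using h by simp
    also have "\<dots> \<le> 0" using zero_le_power2[of a] by linarith
    finally have "a * R \<le> 0" by (simp add: mult.commute)
    then have R0: "R \<le> 0" using a by (simp add: mult_le_0_iff)
    have "D \<le> R^2" using DR \<open>P \<le> 0\<close> by simp
    then have "s \<le> sqrt (R^2)" unfolding s_def by (rule real_sqrt_le_mono)
    then have "s \<le> - R" using R0 by simp
    then have "c - 2*a \<le> lam_minus n a c" unfolding lm R_def by (simp add: field_simps)
    then show "lambda_min (m_mat n a b c) = c - 2*a"
      using inc lmp a by (intro lmin) (auto dest!: cls simp: abs_if split: if_splits)
  next
    assume "c > c_trans n a"
    then have "8*a^2 - real n < c * (4*a*(real n + 1))"
      unfolding ctr using a by (simp add: divide_less_eq qp)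
    then have "P > 0" unfolding P_def by (simp add: algebra_simps)
    have "- R < s"
    proof (cases "R \<ge> 0")
      case False
      have "(-R)^2 < D" using DR \<open>P > 0\<close> by simp
      then show "-R < s" unfolding s_def by (rule real_less_rsqrt)
    next
      case True
      have "R^2 < D" using DR \<open>P > 0\<close> by simp
      then have "R < s" unfolding s_def by (rule real_less_rsqrt)
      then show ?thesis using True by simp
    qed
    then have "lam_minus n a c < c - 2*a" unfolding lm R_def by (simp add: field_simps)
    then show "lambda_min (m_mat n a b c) = lam_minus n a c"
      using inm lmp a by (intro lmin) (auto dest!: cls simp: abs_if split: if_splits)
  next
    show "lambda_max (m_mat n a b c) = lam_plus n a c"
      using inp lmp lp1 a by (intro lmax) (auto dest!: cls simp: abs_if split: if_splits)
  qed
  qed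
  show ?thesis using A B C by blast
qed

end
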